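(* Consider the oLBFGS iteration described in the context and let $\hat B_t$ denote its Hessian approximation. Define $c:=\frac{\tilde m^{\,n+\tau}}{[(n+\tau)\tilde M]^{\,n+\tau-1}}>0$ and $C:=(n+\tau)\tilde M<\infty$. If Assumption A holds, then for all time steps $t\ge1$, $cI\preceq\hat B_t\preceq CI$.
   Context: Let $\theta$ be a random variable with values in a set $\Theta$, $f:\mathbb{R}^n\times\Theta\to\mathbb{R}$, and $F(w)=\mathbb{E}_\theta[f(w,\theta)]$. Fix a sample size $L\ge1$ and memory $\tau\ge1$. For $\tilde\theta=(\theta_1,\dots,\theta_L)\in\Theta^L$ put $\hat f(w,\tilde\theta)=\frac1L\sum_{l=1}^L f(w,\theta_l)$ and $\hat s(w,\tilde\theta)=\frac1L\sum_{l=1}^L\nabla_w f(w,\theta_l)$. oLBFGS: starting from $w_0\in\mathbb{R}^n$, at each $t\ge0$ draw $\tilde\theta_t$ consisting of $L$ independent samples of $\theta$, set $w_{t+1}=w_t-\epsilon_t\hat B_t^{-1}\hat s(w_t,\tilde\theta_t)$ with step sizes $\epsilon_t>0$, and set $v_t=w_{t+1}-w_t$, $\hat r_t=\hat s(w_{t+1},\tilde\theta_t)-\hat s(w_t,\tilde\theta_t)$. The Hessian approximation $\hat B_t$ is built as follows: let $\tau_t=\min(\tau,t)$; set $\hat B_{t,0}=\hat\gamma_t^{-1}I$ with $\hat\gamma_0=1$ and $\hat\gamma_t=v_{t-1}^T\hat r_{t-1}/\|\hat r_{t-1}\|^2$ for $t\ge1$; for $u=0,\dots,\tau_t-1$, with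 $s=t-\tau_t+u$, set $\hat B_{t,u+1}=\hat B_{t,u}-\frac{\hat B_{t,u}v_sv_s^T\hat B_{t,u}}{v_s^T\hat B_{t,u}v_s}+\frac{\hat r_s\hat r_s^T}{v_s^T\hat r_s}$; finally $\hat B_t=\hat B_{t,\tau_t}$, and $\hat B_t^{-1}$ is its inverse. Assumption A: for every $\tilde\theta\in\Theta^L$ the function $w\mapsto\hat f(w,\tilde\theta)$ is twice differentiable and there are constants $0<\tilde m\le\tilde M<\infty$ with $\tilde mI\preceq\nabla_w^2\hat f(w,\tilde\theta)\preceq\tilde MI$ for all $w$ and all $\tilde\theta$. *)

theory Defs
  imports "HOL-Analysis.Analysis"
begin

definition grad :: "(real^'n \<Rightarrow> real) \<Rightarrow> real^'n \<Rightarrow> real^'n" where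
  "grad F w = (SOME g. (F has_derivative (\<lambda>h. g \<bullet> h)) (at w))"

definition hess :: "(real^'n \<Rightarrow> real) \<Rightarrow> real^'n \<Rightarrow> real^'n^'n" where
  "hess F w = (SOME H. (grad F has_derivative (\<lambda>h. H *v h)) (at w))"

definition twice_differentiable :: "(real^'n \<Rightarrow> real) \<Rightarrow> bool" where
  "twice_differentiable F \<longleftrightarrow> (\<forall>w. F differentiable (at w)) \<and> (\<forall>w. grad F differentiable (at w))"

definition loewner_le :: "real^'n^'n \<Rightarrow> real^'n^'n \<Rightarrow> bool" where
  "loewner_le A B \<longleftrightarrow> (\<forall>x. 0 \<le> x \<bullet> ((B - A) *v x))"

(* a sample tuple theta~ in Theta^L is represented as a function nat => 'a, using indices 0..L-1 *)
definition fhat :: "nat \<Rightarrow> (real^'n \<Rightarrow> 'a \<Rightarrow> real) \<Rightarrow> (nat \<Rightarrow> 'a) \<Rightarrow> real^'n \<Rightarrow> real" where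
  "fhat L f ths w = (1 / real L) * (\<Sum>l<L. f w (ths l))"

definition shat :: "nat \<Rightarrow> (real^'n \<Rightarrow> 'a \<Rightarrow> real) \<Rightarrow> (nat \<Rightarrow> 'a) \<Rightarrow> real^'n \<Rightarrow> real^'n" where
  "shat L f ths w = (1 / real L) *\<^sub>R (\<Sum>l<L. grad (\<lambda>x. f x (ths l)) w)"

definition outer :: "real^'n \<Rightarrow> real^'n \<Rightarrow> real^'n^'n" where
  "outer a b = (\<chi> i j. a $ i * b $ j)"

definition bfgs_upd :: "real^'n^'n \<Rightarrow> real^'n \<Rightarrow> real^'n \<Rightarrow> real^'n^'n" where
  "bfgs_upd B v r = B - (1 / (v \<bullet> (B *v v))) *\<^sub>R outer (B *v v) (v v* B)
                      + (1 / (v \<bullet> r)) *\<^sub>R outer r r"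

definition vseq :: "(nat \<Rightarrow> real^'n) \<Rightarrow> nat \<Rightarrow> real^'n" where
  "vseq w t = w (Suc t) - w t"

definition rseq :: "nat \<Rightarrow> (real^'n \<Rightarrow> 'a \<Rightarrow> real) \<Rightarrow> (nat \<Rightarrow> nat \<Rightarrow> 'a) \<Rightarrow> (nat \<Rightarrow> real^'n) \<Rightarrow> nat \<Rightarrow> real^'n" where
  "rseq L f th w t = shat L f (th t) (w (Suc t)) - shat L f (th t) (w t)"

definition gam :: "(nat \<Rightarrow> real^'n) \<Rightarrow> (nat \<Rightarrow> real^'n) \<Rightarrow> nat \<Rightarrow> real" where
  "gam v r t = (if t = 0 then 1 else (v (t - 1) \<bullet> r (t - 1)) / (norm (r (t - 1)))\<^sup>2)"

fun Bu :: "nat \<Rightarrow> (nat \<Rightarrow> real^'n) \<Rightarrow> (nat \<Rightarrow> real^'n) \<Rightarrow> nat \<Rightarrow> nat \<Rightarrow> real^'n^'n" where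
  "Bu tau v r t 0 = inverse (gam v r t) *\<^sub>R mat 1"
| "Bu tau v r t (Suc u) =
     bfgs_upd (Bu tau v r t u) (v (t - min tau t + u)) (r (t - min tau t + u))"

definition Bhat :: "nat \<Rightarrow> (nat \<Rightarrow> real^'n) \<Rightarrow> (nat \<Rightarrow> real^'n) \<Rightarrow> nat \<Rightarrow> real^'n^'n" where
  "Bhat tau v r t = Bu tau v r t (min tau t)"

end

theory Submission
  imports Defs
begin


lemma outer_mv: "outer a b *v x = (b \<bullet> x) *\<^sub>R (a::real^'n)"
  by (simp add: outer_def matrix_vector_mult_def inner_vec_def vec_eq_iff sum_distrib_right sum_distrib_left mult_ac)

lemma transpose_outer: "transpose (outer a b) = outer b (a::real^'n)"
  by (simp add: outer_def transpose_def vec_eq_iff mult.commute)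

lemma sym_vm: "transpose B = B \<Longrightarrow> v v* B = B *v (v::real^'n)"
  by (metis transpose_matrix_vector)

lemma sym_inner: "transpose B = B \<Longrightarrow> x \<bullet> (B *v y) = y \<bullet> (B *v (x::real^'n))"
  by (metis dot_lmul_matrix inner_commute sym_vm)

lemma bfgs_sym:
  assumes "transpose B = B"
  shows "transpose (bfgs_upd B v r) = bfgs_upd B v (r::real^'n)"
  using assms by (simp add: bfgs_upd_def sym_vm outer_def transpose_def vec_eq_iff mult.commute)

lemma bfgs_quad:
  assumes "transpose B = B"
  shows "x \<bullet> (bfgs_upd B v r *v x) = x \<bullet> (B *v x) - (x \<bullet> (B *v v))^2 / (v \<bullet> (B *v v)) + (r \<bullet> x)^2 / (v \<bullet> r)"
  using assms by (simp add: bfgs_upd_def sym_vm algebra_simps outer_mv scaleR_matrix_vector_assoc[symmetric] sym_inner[of B x v] power2_eq_square inner_commute)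





lemma proj_bound:
  fixes u v r :: "real^'n"
  assumes g: "v \<bullet> r \<noteq> 0"
  shows "((v \<bullet> r) *\<^sub>R u - (r \<bullet> u) *\<^sub>R v) \<bullet> ((v \<bullet> r) *\<^sub>R u - (r \<bullet> u) *\<^sub>R v) \<le> (r\<bullet>r)*(v\<bullet>v)*(u\<bullet>u)"
proof -
  define a where "a = u\<bullet>u"
  define b where "b = u\<bullet>v"
  define c where "c = v\<bullet>v"
  define d where "d = u\<bullet>r"
  define e where "e = r\<bullet>r"
  define gg where "gg = v\<bullet>r"
  have c0: "c > 0" using g unfolding c_def by (metis inner_gt_zero_iff inner_zero_left)
  have e0: "e \<ge> 0" unfolding e_def by simp
  have cs: "((c *\<^sub>R u - b *\<^sub>R v) \<bullet> (c *\<^sub>R r - gg *\<^sub>R v))^2 \<le> ((c *\<^sub>R u - b *\<^sub>R v) \<bullet> (c *\<^sub>R u - b *\<^sub>R v)) * ((c *\<^sub>R r - gg *\<^sub>R v) \<bullet> (c *\<^sub>R r - gg *\<^sub>R v))"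
    by (rule Cauchy_Schwarz_ineq)
  hence "(c*(c*d - b*gg))^2 \<le> (c*(a*c - b*b)) * (c*(c*e - gg*gg))"
    by (simp add: inner_simps a_def b_def c_def d_def e_def gg_def inner_commute algebra_simps power2_eq_square)
  hence h: "(c*d - b*gg)^2 \<le> (a*c - b*b) * (c*e - gg*gg)" using c0
    by (simp add: power2_eq_square mult_ac)
  have "c*d*d - 2*b*d*gg + a*gg*gg \<le> a*c*e - b*b*e"
  proof -
    have "c*(c*d*d - 2*b*d*gg + a*gg*gg) \<le> c*(a*c*e - b*b*e)" using h by (simp add: power2_eq_square algebra_simps)
    thus ?thesis using c0 by simp
  qed
  moreover have "b*b*e \<ge> 0" using e0 by simp
  ultimately have "gg*gg*a - 2*gg*d*b + d*d*c \<le> e*c*a" by (simp add: algebra_simps)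
  thus ?thesis
    by (simp add: inner_simps a_def b_def c_def d_def e_def gg_def inner_commute algebra_simps power2_eq_square)
qed

lemma two_le_sum: "(pq::real)^2 \<le> X*Y \<Longrightarrow> X \<ge> 0 \<Longrightarrow> Y \<ge> 0 \<Longrightarrow> 2*pq \<le> X + Y"
proof -
  assume a: "pq^2 \<le> X*Y" "X \<ge> 0" "Y \<ge> 0"
  have "(2*pq)^2 \<le> (X+Y)^2"
  proof -
    have "(2*pq)^2 = 4*pq^2" by (simp add: power2_eq_square)
    also have "\<dots> \<le> 4*(X*Y)" using a(1) by simp
    also have "\<dots> \<le> (X+Y)^2" using zero_le_power2[of "X-Y"] by (simp add: power2_eq_square algebra_simps)
    finally show ?thesis .
  qed
  moreover have "0 \<le> X+Y" using a by linarith
  ultimately show "2*pq \<le> X+Y" by (rule power2_le_imp_le)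
qed

lemma bfgs_lower:
  fixes B :: "real^'n^'n"
  assumes sym: "transpose B = B" and lb: "\<forall>y. \<beta>*(y\<bullet>y) \<le> y\<bullet>(B*v y)" and b0: "\<beta>>0" and vr: "v\<bullet>r > 0"
  shows "x\<bullet>x \<le> ((r\<bullet>r)*(v\<bullet>v)/(v\<bullet>r)^2/\<beta> + (v\<bullet>v)/(v\<bullet>r)) * (x\<bullet>(bfgs_upd B v r *v x))"
proof -
  define g where "g = v\<bullet>r"
  have g0: "g > 0" using vr g_def by simp
  have v0: "v \<noteq> 0" using vr by auto
  have r0: "r \<noteq> 0" using vr by auto
  define c where "c = v\<bullet>v"
  define e where "e = r\<bullet>r"
  have c0: "c > 0" using v0 c_def by simp
  have e0: "e > 0" using r0 e_def by simp
  define Qv where "Qv = v\<bullet>(B*v v)"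
  have Qv0: "Qv > 0"
  proof -
    have "\<beta>*c \<le> Qv" using lb unfolding Qv_def c_def by simp
    moreover have "\<beta>*c > 0" using b0 c0 by simp
    ultimately show ?thesis by linarith
  qed
  define s where "s = r\<bullet>x"
  define t0 where "t0 = (x\<bullet>(B*v v))/Qv"
  define u where "u = x - t0 *\<^sub>R v"
  have sv: "v \<bullet> (B *v x) = x \<bullet> (B *v v)" using sym_inner[OF sym] .
  have Qu: "u\<bullet>(B*v u) = x\<bullet>(B*v x) - (x\<bullet>(B*v v))^2/Qv"
  proof -
    have Bu: "B*v u = B*v x - t0 *\<^sub>R (B*v v)" unfolding u_def by (simp add: matrix_vector_mult_diff_distrib matrix_vector_mult_scaleR)
    have "u\<bullet>(B*v u) = x\<bullet>(B*v x) - 2*t0*(x\<bullet>(B*v v)) + t0^2*Qv"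
      unfolding Bu u_def Qv_def using sv
      by (simp add: inner_diff_left inner_diff_right algebra_simps power2_eq_square)
    also have "\<dots> = x\<bullet>(B*v x) - (x\<bullet>(B*v v))^2/Qv" unfolding t0_def using Qv0 by (simp add: power2_eq_square field_simps)
    finally show ?thesis .
  qed
  have Qp: "x\<bullet>(bfgs_upd B v r *v x) = u\<bullet>(B*v u) + s^2/g"
    using bfgs_quad[OF sym, of x v r] Qu unfolding s_def g_def Qv_def by simp
  define U where "U = u\<bullet>u"
  have bU: "\<beta>*U \<le> u\<bullet>(B*v u)" unfolding U_def by (rule spec[OF lb])
  define p where "p = x - (s/g) *\<^sub>R v"
  have gp: "g *\<^sub>R p = g *\<^sub>R u - (r \<bullet> u) *\<^sub>R v"
  proof -
    have rv: "r \<bullet> v = g" unfolding g_def by (simp add: inner_commute)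
    have ru: "r \<bullet> u = s - t0*g" unfolding u_def s_def using rv by (simp add: inner_diff_right)
    have "g *\<^sub>R p = g *\<^sub>R x - s *\<^sub>R v" unfolding p_def using g0 by (simp add: scaleR_diff_right)
    also have "\<dots> = g *\<^sub>R u - (r \<bullet> u) *\<^sub>R v" 
      unfolding ru by (simp add: u_def scaleR_diff_right scaleR_diff_left mult.commute)
    finally show ?thesis .
  qed
  define P where "P = p\<bullet>p"
  define Kq where "Kq = e*c/g^2"
  have PK: "P \<le> Kq*U"
  proof -
    have "(g *\<^sub>R u - (r \<bullet> u) *\<^sub>R v)\<bullet>(g *\<^sub>R u - (r \<bullet> u) *\<^sub>R v) \<le> e*c*U"
      unfolding e_def c_def U_def g_def by (rule proj_bound) (use vr in simp)
    hence "(g *\<^sub>R p)\<bullet>(g *\<^sub>R p) \<le> e*c*U" by (simp only: gp)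
    hence "g^2 * P \<le> e*c*U" by (simp add: P_def power2_eq_square)
    thus ?thesis unfolding Kq_def using g0 by (simp add: field_simps)
  qed
  define pq where "pq = (s/g)*(p\<bullet>v)"
  have xx: "x\<bullet>x = P + 2*pq + (s/g)^2*c"
  proof -
    have "x = p + (s/g) *\<^sub>R v" unfolding p_def by simp
    hence "x\<bullet>x = (p + (s/g) *\<^sub>R v) \<bullet> (p + (s/g) *\<^sub>R v)" by simp
    thus ?thesis unfolding P_def pq_def c_def by (simp add: inner_simps inner_commute power2_eq_square algebra_simps)
  qed
  have pq2: "pq^2 \<le> P*((s/g)^2*c)"
  proof -
    have "(p\<bullet>v)^2 \<le> P*c" unfolding P_def c_def by (rule Cauchy_Schwarz_ineq)
    hence "(s/g)^2*(p\<bullet>v)^2 \<le> (s/g)^2*(P*c)" by (simp add: mult_left_mono)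
    moreover have "pq^2 = (s/g)^2*(p\<bullet>v)^2" unfolding pq_def by (simp add: power_divide power_mult_distrib)
    ultimately show ?thesis by (simp add: mult_ac)
  qed
  have Kq0: "Kq > 0" unfolding Kq_def using e0 c0 g0 by simp
  have U0: "U \<ge> 0" unfolding U_def by simp
  define XX where "XX = Kq*(s^2)/(\<beta>*g)"
  define YY where "YY = c*\<beta>*U/g"
  have X0: "XX \<ge> 0" unfolding XX_def using Kq0 g0 b0 by simp
  have Y0: "YY \<ge> 0" unfolding YY_def using c0 g0 b0 U0 by simp
  have XY: "XX*YY = Kq*U*((s/g)^2*c)" unfolding XX_def YY_def using g0 b0 by (simp add: field_simps power2_eq_square)
  have P0: "P \<ge> 0" unfolding P_def by simp
  have "P*((s/g)^2*c) \<le> Kq*U*((s/g)^2*c)" using PK c0 by (intro mult_right_mono) simp_all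
  hence "pq^2 \<le> XX*YY" using pq2 XY by linarith
  hence pqXY: "2*pq \<le> XX+YY" using X0 Y0 by (rule two_le_sum)
  have rhs: "(Kq/\<beta> + c/g) * (\<beta>*U + s^2/g) = Kq*U + XX + YY + (s/g)^2*c"
    unfolding XX_def YY_def using g0 b0 by (simp add: field_simps power2_eq_square)
  have coef0: "Kq/\<beta> + c/g \<ge> 0" using Kq0 b0 c0 g0 by simp
  have "x\<bullet>x \<le> (Kq/\<beta> + c/g) * (\<beta>*U + s^2/g)" using rhs xx pqXY PK by linarith
  also have "\<dots> \<le> (Kq/\<beta> + c/g) * (x\<bullet>(bfgs_upd B v r *v x))"
    using Qp bU coef0 by (simp add: mult_left_mono)
  finally show ?thesis unfolding Kq_def e_def c_def g_def by simp
qed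




lemma grad_works:
  fixes F :: "real^'n \<Rightarrow> real"
  assumes "F differentiable (at w)"
  shows "(F has_derivative (\<lambda>h. grad F w \<bullet> h)) (at w)"
proof -
  obtain D where D: "(F has_derivative D) (at w)" using assms unfolding differentiable_def by blast
  have lin: "linear D" using D by (rule has_derivative_linear)
  have "D = (\<lambda>h. adjoint D 1 \<bullet> h)"
  proof
    fix h
    show "D h = adjoint D 1 \<bullet> h" using adjoint_works[OF lin, of h 1] by (simp add: inner_commute)
  qed
  hence "\<exists>g. (F has_derivative (\<lambda>h. g \<bullet> h)) (at w)" using D by metis
  thus ?thesis unfolding grad_def by (rule someI_ex)
qed

lemma grad_unique:
  fixes F :: "real^'n \<Rightarrow> real"
  assumes "(F has_derivative (\<lambda>h. g \<bullet> h)) (at w)"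
  shows "grad F w = g"
proof -
  have d: "F differentiable (at w)" using assms unfolding differentiable_def by blast
  have "(\<lambda>h. g \<bullet> h) = (\<lambda>h. grad F w \<bullet> h)" using has_derivative_unique[OF assms grad_works[OF d]] .
  hence "g \<bullet> (g - grad F w) = grad F w \<bullet> (g - grad F w)" by metis
  hence "(g - grad F w) \<bullet> (g - grad F w) = 0" by (simp add: inner_diff_left)
  thus ?thesis by simp
qed

lemma hess_works:
  fixes F :: "real^'n \<Rightarrow> real"
  assumes "grad F differentiable (at w)"
  shows "(grad F has_derivative (\<lambda>h. hess F w *v h)) (at w)"
proof -
  obtain D where D: "(grad F has_derivative D) (at w)" using assms unfolding differentiable_def by blast
  have lin: "linear D" using D by (rule has_derivative_linear)
  have "D = (\<lambda>h. matrix D *v h)" using matrix_vector_mul(2)[OF lin] by simp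
  hence "\<exists>H. (grad F has_derivative (\<lambda>h. H *v h)) (at w)" using D by metis
  thus ?thesis unfolding hess_def by (rule someI_ex)
qed

lemma loewner_lower:
  assumes "loewner_le (m *\<^sub>R mat 1) H"
  shows "m * (h \<bullet> h) \<le> h \<bullet> (H *v (h::real^'n))"
proof -
  have "0 \<le> h \<bullet> ((H - m *\<^sub>R mat 1) *v h)" using assms unfolding loewner_le_def by blast
  also have "(H - m *\<^sub>R mat 1) *v h = H *v h - m *\<^sub>R h"
    by (simp add: matrix_vector_mult_diff_rdistrib scaleR_matrix_vector_assoc[symmetric])
  finally show ?thesis by (simp add: inner_diff_right)
qed

lemma loewner_upper:
  assumes "loewner_le H (M *\<^sub>R mat 1)"
  shows "h \<bullet> (H *v (h::real^'n)) \<le> M * (h \<bullet> h)"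
proof -
  have "0 \<le> h \<bullet> ((M *\<^sub>R mat 1 - H) *v h)" using assms unfolding loewner_le_def by blast
  also have "(M *\<^sub>R mat 1 - H) *v h = M *\<^sub>R h - H *v h"
    by (simp add: matrix_vector_mult_diff_rdistrib scaleR_matrix_vector_assoc[symmetric])
  finally show ?thesis by (simp add: inner_diff_right)
qed

locale hfun =
  fixes F :: "real^'n \<Rightarrow> real" and m M :: real
  assumes td: "twice_differentiable F"
    and hb: "\<forall>x. loewner_le (m *\<^sub>R mat 1) (hess F x) \<and> loewner_le (hess F x) (M *\<^sub>R mat 1)"
    and m0: "0 < m" and mM: "m \<le> M"
begin

lemma gw: "(F has_derivative (\<lambda>h. grad F w \<bullet> h)) (at w)"
  using td grad_works unfolding twice_differentiable_def by blast

lemma hw: "(grad F has_derivative (\<lambda>h. hess F w *v h)) (at w)"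
  using td hess_works unfolding twice_differentiable_def by blast

lemma deriv_line_F:
  "((\<lambda>s. F (x + s *\<^sub>R d)) has_real_derivative (grad F (x + s *\<^sub>R d) \<bullet> d)) (at s)"
proof -
  have l: "((\<lambda>s. x + s *\<^sub>R d) has_derivative (\<lambda>h. h *\<^sub>R d)) (at s)"
    by (auto intro!: derivative_eq_intros)
  have "((\<lambda>s. F (x + s *\<^sub>R d)) has_derivative (\<lambda>h. grad F (x + s *\<^sub>R d) \<bullet> (h *\<^sub>R d))) (at s)"
    using has_derivative_compose[OF l gw] .
  moreover have "(\<lambda>h. grad F (x + s *\<^sub>R d) \<bullet> (h *\<^sub>R d)) = (*) (grad F (x + s *\<^sub>R d) \<bullet> d)"
    by (auto simp: mult.commute)
  ultimately show ?thesis unfolding has_field_derivative_def by simp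
qed

lemma deriv_line_G:
  "((\<lambda>s. d \<bullet> grad F (x + s *\<^sub>R d)) has_real_derivative (d \<bullet> (hess F (x + s *\<^sub>R d) *v d))) (at s)"
proof -
  have l: "((\<lambda>s. x + s *\<^sub>R d) has_derivative (\<lambda>h. h *\<^sub>R d)) (at s)"
    by (auto intro!: derivative_eq_intros)
  have "((\<lambda>s. grad F (x + s *\<^sub>R d)) has_derivative (\<lambda>h. hess F (x + s *\<^sub>R d) *v (h *\<^sub>R d))) (at s)"
    using has_derivative_compose[OF l hw] .
  hence "((\<lambda>s. d \<bullet> grad F (x + s *\<^sub>R d)) has_derivative (\<lambda>h. d \<bullet> (hess F (x + s *\<^sub>R d) *v (h *\<^sub>R d)))) (at s)"
    by (rule has_derivative_inner_right)
  moreover have "(\<lambda>h. d \<bullet> (hess F (x + s *\<^sub>R d) *v (h *\<^sub>R d))) = (*) (d \<bullet> (hess F (x + s *\<^sub>R d) *v d))"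
    by (auto simp: mult.commute matrix_vector_mult_scaleR)
  ultimately show ?thesis unfolding has_field_derivative_def by simp
qed

lemma mono_bounds:
  "m * (d \<bullet> d) \<le> d \<bullet> (grad F (x + d) - grad F x) \<and> d \<bullet> (grad F (x + d) - grad F x) \<le> M * (d \<bullet> d)"
proof -
  obtain z where z: "(d \<bullet> grad F (x + 1 *\<^sub>R d)) - (d \<bullet> grad F (x + 0 *\<^sub>R d)) = (1 - 0) * (d \<bullet> (hess F (x + z *\<^sub>R d) *v d))"
    using MVT2[of 0 1 "\<lambda>s. d \<bullet> grad F (x + s *\<^sub>R d)" "\<lambda>s. d \<bullet> (hess F (x + s *\<^sub>R d) *v d)"] deriv_line_G
    by auto
  have e: "d \<bullet> (grad F (x + d) - grad F x) = d \<bullet> (hess F (x + z *\<^sub>R d) *v d)"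
    using z by (simp add: inner_diff_right)
  show ?thesis unfolding e using hb loewner_lower loewner_upper by blast
qed

lemma mono_lower: "m * ((y - x) \<bullet> (y - x)) \<le> (y - x) \<bullet> (grad F y - grad F x)"
  using mono_bounds[of "y - x" x] by simp

lemma mono_upper: "(y - x) \<bullet> (grad F y - grad F x) \<le> M * ((y - x) \<bullet> (y - x))"
  using mono_bounds[of "y - x" x] by simp

lemma F_lower: "F x + grad F x \<bullet> d \<le> F (x + d)"
proof -
  define \<psi> where "\<psi> s = F (x + s *\<^sub>R d) - s * (grad F x \<bullet> d)" for s
  have D: "(\<psi> has_real_derivative (grad F (x + s *\<^sub>R d) \<bullet> d - grad F x \<bullet> d)) (at s)" for s
    unfolding \<psi>_def by (auto intro!: derivative_eq_intros deriv_line_F)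
  obtain z where z: "0 < z" "z < 1" "\<psi> 1 - \<psi> 0 = (1 - 0) * (grad F (x + z *\<^sub>R d) \<bullet> d - grad F x \<bullet> d)"
    using MVT2[of 0 1 \<psi> "\<lambda>s. grad F (x + s *\<^sub>R d) \<bullet> d - grad F x \<bullet> d"]
    by (metis D zero_less_one)
  have "m * ((z *\<^sub>R d) \<bullet> (z *\<^sub>R d)) \<le> (z *\<^sub>R d) \<bullet> (grad F (x + z *\<^sub>R d) - grad F x)"
    using mono_lower[of "x + z *\<^sub>R d" x] by simp
  hence "z * (z * (m * (d \<bullet> d))) \<le> z * (d \<bullet> (grad F (x + z *\<^sub>R d) - grad F x))" by (simp add: mult_ac)
  moreover have "0 \<le> z * (z * (m * (d \<bullet> d)))" using z m0 by simp
  ultimately have "0 \<le> z * (d \<bullet> (grad F (x + z *\<^sub>R d) - grad F x))" by linarith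
  hence "0 \<le> d \<bullet> (grad F (x + z *\<^sub>R d) - grad F x)" using z by (simp add: zero_le_mult_iff)
  hence "0 \<le> \<psi> 1 - \<psi> 0" using z by (simp add: inner_diff_right inner_commute)
  thus ?thesis unfolding \<psi>_def by simp
qed

lemma F_upper: "F (x + d) \<le> F x + grad F x \<bullet> d + M / 2 * (d \<bullet> d)"
proof -
  define \<psi> where "\<psi> s = F (x + s *\<^sub>R d) - s * (grad F x \<bullet> d) - M/2 * s^2 * (d \<bullet> d)" for s
  have D: "(\<psi> has_real_derivative (grad F (x + s *\<^sub>R d) \<bullet> d - grad F x \<bullet> d - M * s * (d \<bullet> d))) (at s)" for s
    unfolding \<psi>_def by (auto intro!: derivative_eq_intros deriv_line_F simp: power2_eq_square)
  obtain z where z: "0 < z" "z < 1" "\<psi> 1 - \<psi> 0 = (1 - 0) * (grad F (x + z *\<^sub>R d) \<bullet> d - grad F x \<bullet> d - M * z * (d \<bullet> d))"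
    using MVT2[of 0 1 \<psi> "\<lambda>s. grad F (x + s *\<^sub>R d) \<bullet> d - grad F x \<bullet> d - M * s * (d \<bullet> d)"]
    by (metis D zero_less_one)
  have "(z *\<^sub>R d) \<bullet> (grad F (x + z *\<^sub>R d) - grad F x) \<le> M * ((z *\<^sub>R d) \<bullet> (z *\<^sub>R d))"
    using mono_upper[of "x + z *\<^sub>R d" x] by simp
  hence "z * (d \<bullet> (grad F (x + z *\<^sub>R d) - grad F x)) \<le> z * (M * z * (d \<bullet> d))" by (simp add: mult_ac)
  hence "d \<bullet> (grad F (x + z *\<^sub>R d) - grad F x) \<le> M * z * (d \<bullet> d)" using z by simp
  hence "\<psi> 1 - \<psi> 0 \<le> 0" using z by (simp add: inner_diff_right inner_commute)
  thus ?thesis unfolding \<psi>_def by simp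
qed

lemma cocoercive:
  "(grad F y - grad F x) \<bullet> (grad F y - grad F x) \<le> M * ((y - x) \<bullet> (grad F y - grad F x))"
proof -
  have M0: "M > 0" using m0 mM by simp
  define r where "r = grad F y - grad F x"
  define k where "k = 1 / M"
  define gx where "gx = grad F x"
  define gy where "gy = grad F y"
  have rr: "r = gy - gx" unfolding r_def gx_def gy_def by simp
  have I1: "F x + gx \<bullet> ((y - k *\<^sub>R r) - x) \<le> F (y - k *\<^sub>R r)"
    using F_lower[of x "(y - k *\<^sub>R r) - x"] unfolding gx_def by simp
  have I2: "F (y - k *\<^sub>R r) \<le> F y + gy \<bullet> (- (k *\<^sub>R r)) + M / 2 * ((k *\<^sub>R r) \<bullet> (k *\<^sub>R r))"
    using F_upper[of y "- (k *\<^sub>R r)"] unfolding gy_def by simp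
  have J1: "F y + gy \<bullet> ((x + k *\<^sub>R r) - y) \<le> F (x + k *\<^sub>R r)"
    using F_lower[of y "(x + k *\<^sub>R r) - y"] unfolding gy_def by simp
  have J2: "F (x + k *\<^sub>R r) \<le> F x + gx \<bullet> (k *\<^sub>R r) + M / 2 * ((k *\<^sub>R r) \<bullet> (k *\<^sub>R r))"
    using F_upper[of x "k *\<^sub>R r"] unfolding gx_def by simp
  have kk: "M / 2 * ((k *\<^sub>R r) \<bullet> (k *\<^sub>R r)) = k / 2 * (r \<bullet> r)"
    unfolding k_def using M0 by (simp add: power2_eq_square)
  have I1': "F x + (gx \<bullet> y - gx \<bullet> x) - k * (gx \<bullet> r) \<le> F (y - k *\<^sub>R r)"
    using I1 by (simp add: inner_diff_right inner_add_right)
  have I2': "F (y - k *\<^sub>R r) \<le> F y - k * (gy \<bullet> r) + k / 2 * (r \<bullet> r)"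
    using I2 unfolding kk by simp
  have J1': "F y + (gy \<bullet> x - gy \<bullet> y) + k * (gy \<bullet> r) \<le> F (x + k *\<^sub>R r)"
    using J1 by (simp add: inner_diff_right inner_add_right)
  have J2': "F (x + k *\<^sub>R r) \<le> F x + k * (gx \<bullet> r) + k / 2 * (r \<bullet> r)"
    using J2 unfolding kk by simp
  have e1: "k * (gy \<bullet> r) - k * (gx \<bullet> r) = k * (r \<bullet> r)" unfolding rr by (simp add: inner_diff_left algebra_simps)
  have e2: "(gx \<bullet> y - gx \<bullet> x) + (gy \<bullet> x - gy \<bullet> y) = - ((y - x) \<bullet> r)" unfolding rr
    by (simp add: inner_diff_left inner_diff_right inner_commute algebra_simps)
  have "k * (r \<bullet> r) \<le> (y - x) \<bullet> r" using I1' I2' J1' J2' e1 e2 by linarith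
  hence "M * (k * (r \<bullet> r)) \<le> M * ((y - x) \<bullet> r)" using M0 by simp
  thus ?thesis unfolding r_def k_def using M0 by simp
qed

end




lemma loewner_of_lower:
  assumes "\<forall>x. c * (x \<bullet> x) \<le> x \<bullet> (B *v (x::real^'n))"
  shows "loewner_le (c *\<^sub>R mat 1) B"
  unfolding loewner_le_def
proof
  fix x :: "real^'n"
  have "(B - c *\<^sub>R mat 1) *v x = B *v x - c *\<^sub>R x"
    by (simp add: matrix_vector_mult_diff_rdistrib scaleR_matrix_vector_assoc[symmetric])
  thus "0 \<le> x \<bullet> ((B - c *\<^sub>R mat 1) *v x)" using assms by (simp add: inner_diff_right)
qed

lemma loewner_of_upper:
  assumes "\<forall>x. x \<bullet> (B *v (x::real^'n)) \<le> C * (x \<bullet> x)"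
  shows "loewner_le B (C *\<^sub>R mat 1)"
  unfolding loewner_le_def
proof
  fix x :: "real^'n"
  have "(C *\<^sub>R mat 1 - B) *v x = C *\<^sub>R x - B *v x"
    by (simp add: matrix_vector_mult_diff_rdistrib scaleR_matrix_vector_assoc[symmetric])
  thus "0 \<le> x \<bullet> ((C *\<^sub>R mat 1 - B) *v x)" using assms by (simp add: inner_diff_right)
qed

lemma num_step:
  fixes xx A Ab Q bf :: real
  assumes "xx \<le> A * Q" "0 < A" "A \<le> Ab" "0 < xx" "bf * Ab \<le> 1" "0 \<le> bf"
  shows "bf * xx \<le> Q"
proof -
  have "A * Q > 0" using assms(1,4) by linarith
  hence Q0: "Q > 0" using assms(2) by (simp add: zero_less_mult_iff)
  have "bf * xx \<le> bf * (A * Q)" using assms(1,6) by (rule mult_left_mono)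
  also have "\<dots> = (bf * A) * Q" by simp
  also have "\<dots> \<le> 1 * Q"
  proof (rule mult_right_mono)
    have "bf * A \<le> bf * Ab" using assms(3,6) by (rule mult_left_mono)
    thus "bf * A \<le> 1" using assms(5) by linarith
  qed (use Q0 in simp)
  finally show ?thesis by simp
qed

lemma Bu_bounds:
  fixes v r :: "nat \<Rightarrow> real^'n" and m M :: real
  assumes m0: "0 < m" and mM: "m \<le> M" and t1: "t \<ge> 1"
    and P: "\<And>s. s < t \<Longrightarrow> m * (v s \<bullet> v s) \<le> v s \<bullet> r s \<and> r s \<bullet> r s \<le> M * (v s \<bullet> r s) \<and> v s \<noteq> 0"
  shows "u \<le> min \<tau> t \<Longrightarrow> transpose (Bu \<tau> v r t u) = Bu \<tau> v r t u \<and>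
     (\<forall>x. m / (real (u+1) * (M/m)^u) * (x \<bullet> x) \<le> x \<bullet> (Bu \<tau> v r t u *v x)) \<and>
     (\<forall>x. x \<bullet> (Bu \<tau> v r t u *v x) \<le> real (u+1) * M * (x \<bullet> x))"
proof (induction u)
  case 0
  define s where "s = t - 1"
  have st: "s < t" using t1 s_def by simp
  from P[OF st] have h1: "m * (v s \<bullet> v s) \<le> v s \<bullet> r s" and h2: "r s \<bullet> r s \<le> M * (v s \<bullet> r s)"
    and h3: "v s \<noteq> 0" by auto
  have vv: "v s \<bullet> v s > 0" using h3 by simp
  have vr: "v s \<bullet> r s > 0" using h1 vv m0 by (smt (verit) mult_pos_pos)
  have gam: "inverse (gam v r t) = (r s \<bullet> r s) / (v s \<bullet> r s)"
    using t1 unfolding gam_def s_def by (simp add: power2_norm_eq_inner)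
  have up: "(r s \<bullet> r s) / (v s \<bullet> r s) \<le> M" using h2 vr by (simp add: divide_le_eq)
  have low: "m \<le> (r s \<bullet> r s) / (v s \<bullet> r s)"
  proof -
    have cs: "(v s \<bullet> r s)^2 \<le> (v s \<bullet> v s) * (r s \<bullet> r s)" by (rule Cauchy_Schwarz_ineq)
    have "m * (v s \<bullet> r s) * (v s \<bullet> v s) \<le> (v s \<bullet> r s) * (v s \<bullet> r s)"
      using h1 vr by (simp add: mult_left_mono mult.commute mult.left_commute)
    also have "\<dots> \<le> (r s \<bullet> r s) * (v s \<bullet> v s)" using cs by (simp add: power2_eq_square mult.commute)
    finally have "m * (v s \<bullet> r s) \<le> r s \<bullet> r s" using vv by simp
    thus ?thesis using vr by (simp add: le_divide_eq)
  qed
  have B0: "Bu \<tau> v r t 0 = ((r s \<bullet> r s) / (v s \<bullet> r s)) *\<^sub>R mat 1" using gam by simp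
  have q: "x \<bullet> (Bu \<tau> v r t 0 *v x) = ((r s \<bullet> r s) / (v s \<bullet> r s)) * (x \<bullet> x)" for x
    unfolding B0 by (simp add: scaleR_matrix_vector_assoc[symmetric])
  have tr: "transpose (Bu \<tau> v r t 0) = Bu \<tau> v r t 0" unfolding B0
    by (simp add: transpose_scalar transpose_mat)
  define lam where "lam = (r s \<bullet> r s) / (v s \<bullet> r s)"
  have q': "x \<bullet> (Bu \<tau> v r t 0 *v x) = lam * (x \<bullet> x)" for x using q[of x] unfolding lam_def .
  have L: "m / (real (0+1) * (M/m)^0) * (x \<bullet> x) \<le> x \<bullet> (Bu \<tau> v r t 0 *v x)" for x
    unfolding q' using low unfolding lam_def[symmetric] by (simp add: mult_right_mono)
  have U: "x \<bullet> (Bu \<tau> v r t 0 *v x) \<le> real (0+1) * M * (x \<bullet> x)" for x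
    unfolding q' using up unfolding lam_def[symmetric] by (simp add: mult_right_mono)
  show ?case using tr L U by blast
next
  case (Suc u)
  hence IH: "transpose (Bu \<tau> v r t u) = Bu \<tau> v r t u"
     "\<forall>x. m / (real (u+1) * (M/m)^u) * (x \<bullet> x) \<le> x \<bullet> (Bu \<tau> v r t u *v x)"
     "\<forall>x. x \<bullet> (Bu \<tau> v r t u *v x) \<le> real (u+1) * M * (x \<bullet> x)" by auto
  define s where "s = t - min \<tau> t + u"
  have st: "s < t" using Suc.prems unfolding s_def by (auto simp: min_def)
  define B where "B = Bu \<tau> v r t u"
  define vs where "vs = v s"
  define rs where "rs = r s"
  have BS: "Bu \<tau> v r t (Suc u) = bfgs_upd B vs rs" unfolding B_def vs_def rs_def s_def by simp
  from P[OF st] have h1: "m * (vs \<bullet> vs) \<le> vs \<bullet> rs" and h2: "rs \<bullet> rs \<le> M * (vs \<bullet> rs)"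
    and h3: "vs \<noteq> 0" unfolding vs_def rs_def by auto
  have vv: "vs \<bullet> vs > 0" using h3 by simp
  have vr: "vs \<bullet> rs > 0" using h1 vv m0 by (smt (verit) mult_pos_pos)
  have M0: "M > 0" using m0 mM by simp
  define \<rho> where "\<rho> = M / m"
  have \<rho>1: "\<rho> \<ge> 1" unfolding \<rho>_def using m0 mM by simp
  define \<beta> where "\<beta> = m / (real (u+1) * \<rho>^u)"
  have b0: "\<beta> > 0" unfolding \<beta>_def using m0 \<rho>1 by simp
  have sym: "transpose B = B" using IH(1) B_def by simp
  have lb: "\<forall>y. \<beta>*(y\<bullet>y) \<le> y\<bullet>(B*v y)" using IH(2) unfolding B_def \<beta>_def \<rho>_def .
  have ub: "\<forall>y. y\<bullet>(B*v y) \<le> real (u+1) * M * (y\<bullet>y)" using IH(3) unfolding B_def .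
  have symS: "transpose (Bu \<tau> v r t (Suc u)) = Bu \<tau> v r t (Suc u)" unfolding BS using sym by (rule bfgs_sym)
  have upS: "x \<bullet> (Bu \<tau> v r t (Suc u) *v x) \<le> real (Suc u + 1) * M * (x \<bullet> x)" for x
  proof -
    have Qv: "vs \<bullet> (B *v vs) > 0"
    proof -
      have "\<beta> * (vs \<bullet> vs) \<le> vs \<bullet> (B *v vs)" using lb by blast
      moreover have "\<beta> * (vs \<bullet> vs) > 0" using b0 vv by simp
      ultimately show ?thesis by linarith
    qed
    have t1': "(x \<bullet> (B *v vs))^2 / (vs \<bullet> (B *v vs)) \<ge> 0" using Qv by simp
    have cs: "(rs \<bullet> x)^2 \<le> (rs \<bullet> rs) * (x \<bullet> x)" by (rule Cauchy_Schwarz_ineq)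
    have "(rs \<bullet> x)^2 / (vs \<bullet> rs) \<le> (rs \<bullet> rs) * (x \<bullet> x) / (vs \<bullet> rs)"
      using cs vr by (simp add: divide_right_mono)
    also have "\<dots> = ((rs \<bullet> rs) / (vs \<bullet> rs)) * (x \<bullet> x)" by simp
    also have "\<dots> \<le> M * (x \<bullet> x)"
    proof (rule mult_right_mono)
      show "(rs \<bullet> rs) / (vs \<bullet> rs) \<le> M" using h2 vr by (simp add: divide_le_eq)
    qed simp
    finally have t2: "(rs \<bullet> x)^2 / (vs \<bullet> rs) \<le> M * (x \<bullet> x)" .
    have "x \<bullet> (Bu \<tau> v r t (Suc u) *v x) = x \<bullet> (B *v x) - (x \<bullet> (B *v vs))^2 / (vs \<bullet> (B *v vs)) + (rs \<bullet> x)^2 / (vs \<bullet> rs)"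
      unfolding BS by (rule bfgs_quad[OF sym])
    also have "\<dots> \<le> real (u+1) * M * (x \<bullet> x) + M * (x \<bullet> x)" using t1' t2 ub by smt
    also have "\<dots> = real (Suc u + 1) * M * (x \<bullet> x)" by (simp add: algebra_simps)
    finally show ?thesis .
  qed
  have lowS: "m / (real (Suc u + 1) * \<rho>^(Suc u)) * (x \<bullet> x) \<le> x \<bullet> (Bu \<tau> v r t (Suc u) *v x)" for x
  proof (cases "x = 0")
    case True thus ?thesis by simp
  next
    case False
    hence xx: "x \<bullet> x > 0" by simp
    define A where "A = (rs\<bullet>rs)*(vs\<bullet>vs)/(vs\<bullet>rs)^2/\<beta> + (vs\<bullet>vs)/(vs\<bullet>rs)"
    have main: "x\<bullet>x \<le> A * (x \<bullet> (Bu \<tau> v r t (Suc u) *v x))"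
      unfolding BS A_def by (rule bfgs_lower[OF sym lb b0 vr])
    have A0: "A > 0"
    proof -
      have "(rs\<bullet>rs)*(vs\<bullet>vs)/(vs\<bullet>rs)^2/\<beta> \<ge> 0" using b0 by simp
      moreover have "(vs\<bullet>vs)/(vs\<bullet>rs) > 0" using vv vr by simp
      ultimately show ?thesis unfolding A_def by linarith
    qed
    define Ab where "Ab = \<rho> / \<beta> + 1 / m"
    have Kq: "(rs\<bullet>rs)*(vs\<bullet>vs)/(vs\<bullet>rs)^2 \<le> \<rho>"
    proof -
      have "(rs\<bullet>rs)*(vs\<bullet>vs) \<le> (M * (vs \<bullet> rs)) * ((vs \<bullet> rs) / m)"
      proof (rule mult_mono)
        show "vs \<bullet> vs \<le> vs \<bullet> rs / m" using h1 m0 by (simp add: le_divide_eq mult.commute)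
      qed (use h2 vv vr M0 in auto)
      also have "\<dots> = \<rho> * (vs\<bullet>rs)^2" unfolding \<rho>_def by (simp add: power2_eq_square)
      finally show ?thesis using vr by (simp add: divide_le_eq)
    qed
    have cg: "(vs\<bullet>vs)/(vs\<bullet>rs) \<le> 1/m" using h1 vr m0 by (simp add: divide_le_eq le_divide_eq mult.commute)
    have AAb: "A \<le> Ab"
    proof -
      have "(rs\<bullet>rs)*(vs\<bullet>vs)/(vs\<bullet>rs)^2/\<beta> \<le> \<rho> / \<beta>"
        by (rule divide_right_mono[OF Kq]) (use b0 in simp)
      thus ?thesis unfolding A_def Ab_def using cg by linarith
    qed
    define bf where "bf = m / (real (Suc u + 1) * \<rho>^(Suc u))"
    have pw: "\<rho>^(Suc u) \<ge> 1" using \<rho>1 by (rule one_le_power)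
    have "\<rho> \<noteq> 0" using \<rho>1 by auto
    have bf0: "bf \<ge> 0" unfolding bf_def using m0 pw by simp
    have Ab_eq: "Ab = (real (u+1) * \<rho>^(Suc u) + 1) / m" unfolding Ab_def \<beta>_def using m0 \<rho>1
      by (simp add: field_simps)
    define XX where "XX = real (u+1) * \<rho>^(Suc u) + 1"
    define DD where "DD = real (Suc u + 1) * \<rho>^(Suc u)"
    have "bf * Ab = (m / DD) * (XX / m)" unfolding bf_def Ab_eq XX_def DD_def by simp
    also have "\<dots> = (m * XX) / (DD * m)" by (rule times_divide_times_eq)
    also have "\<dots> = XX / DD" using m0 by simp
    also have "\<dots> \<le> 1"
    proof -
      have DDp: "DD > 0" using pw unfolding DD_def by simp
      have "XX \<le> DD" using pw unfolding XX_def DD_def by (simp add: algebra_simps)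
      thus ?thesis using DDp by (simp add: divide_le_eq)
    qed
    finally have "bf * Ab \<le> 1" .
    from num_step[OF main A0 AAb xx this bf0] show ?thesis unfolding bf_def .
  qed
  show ?case using symS upS lowS unfolding \<rho>_def by auto
qed




lemma fhat_const:
  assumes "L \<ge> 1"
  shows "fhat L f (\<lambda>_. a) = (\<lambda>w. f w a)"
  using assms by (auto simp: fhat_def fun_eq_iff)

lemma shat_grad:
  fixes f :: "real^'n \<Rightarrow> 'a \<Rightarrow> real"
  assumes L: "L \<ge> 1"
    and A: "\<And>ths. (\<forall>l<L. ths l \<in> \<Theta>) \<Longrightarrow> twice_differentiable (fhat L f ths)"
    and ths: "\<forall>l<L. ths l \<in> \<Theta>"
  shows "shat L f ths w = grad (fhat L f ths) w"
proof -
  have ind: "((\<lambda>x. f x (ths l)) has_derivative (\<lambda>h. grad (\<lambda>x. f x (ths l)) w \<bullet> h)) (at w)" if l: "l < L" for l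
  proof -
    have "\<forall>l'<L. (\<lambda>_. ths l) l' \<in> \<Theta>" using ths l by simp
    hence "twice_differentiable (fhat L f (\<lambda>_. ths l))" by (rule A)
    moreover have "fhat L f (\<lambda>_. ths l) = (\<lambda>x. f x (ths l))" by (rule fhat_const[OF L])
    ultimately have "twice_differentiable (\<lambda>x. f x (ths l))" by simp
    hence "(\<lambda>x. f x (ths l)) differentiable (at w)" unfolding twice_differentiable_def by blast
    thus ?thesis by (rule grad_works)
  qed
  have "((\<lambda>x. \<Sum>l<L. f x (ths l)) has_derivative (\<lambda>h. \<Sum>l<L. grad (\<lambda>x. f x (ths l)) w \<bullet> h)) (at w)"
    using ind by (intro has_derivative_sum) auto
  hence "((\<lambda>x. (1 / real L) * (\<Sum>l<L. f x (ths l))) has_derivative (\<lambda>h. (1 / real L) * (\<Sum>l<L. grad (\<lambda>x. f x (ths l)) w \<bullet> h))) (at w)"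
    by (rule has_derivative_mult_right)
  moreover have "(\<lambda>h. (1 / real L) * (\<Sum>l<L. grad (\<lambda>x. f x (ths l)) w \<bullet> h)) = (\<lambda>h. shat L f ths w \<bullet> h)"
    by (auto simp: shat_def inner_sum_left)
  moreover have "(\<lambda>x. (1 / real L) * (\<Sum>l<L. f x (ths l))) = fhat L f ths"
    by (auto simp: fhat_def fun_eq_iff)
  ultimately have "(fhat L f ths has_derivative (\<lambda>h. shat L f ths w \<bullet> h)) (at w)" by simp
  thus ?thesis by (rule grad_unique[symmetric])
qed

lemma matrix_inv_right:
  fixes A :: "real^'n^'n"
  assumes "invertible A"
  shows "A ** matrix_inv A = mat 1"
proof -
  have "\<exists>A'. A ** A' = mat 1 \<and> A' ** A = mat 1" using assms unfolding invertible_def .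
  hence "A ** matrix_inv A = mat 1 \<and> matrix_inv A ** A = mat 1" unfolding matrix_inv_def by (rule someI_ex)
  thus ?thesis by simp
qed

lemma pd_invertible:
  fixes B :: "real^'n^'n"
  assumes b: "\<beta> > 0" and lb: "\<forall>x. \<beta> * (x \<bullet> x) \<le> x \<bullet> (B *v x)"
  shows "invertible B"
proof -
  have "\<forall>x. B *v x = 0 \<longrightarrow> x = 0"
  proof (intro allI impI)
    fix x assume "B *v x = 0"
    hence "\<beta> * (x \<bullet> x) \<le> 0" using lb by (metis inner_zero_right)
    hence "x \<bullet> x \<le> 0" using b by (simp add: mult_le_0_iff)
    thus "x = 0" by (metis inner_eq_zero_iff inner_ge_zero order_antisym)
  qed
  hence "\<exists>B'. B' ** B = mat 1" using matrix_left_invertible_ker by blast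
  thus ?thesis using invertible_left_inverse by blast
qed

theorem lemma4:
  fixes f :: "real^'n \<Rightarrow> 'a \<Rightarrow> real" and \<Theta> :: "'a set"
    and L \<tau> :: nat and m M :: real
    and w :: "nat \<Rightarrow> real^'n" and \<epsilon> :: "nat \<Rightarrow> real"
    and th :: "nat \<Rightarrow> nat \<Rightarrow> 'a"
  assumes L: "L \<ge> 1" and tau: "\<tau> \<ge> 1"
    and mM: "0 < m" "m \<le> M"
    and A: "\<And>ths. (\<forall>l<L. ths l \<in> \<Theta>) \<Longrightarrow>
              twice_differentiable (fhat L f ths) \<and>
              (\<forall>x. loewner_le (m *\<^sub>R mat 1) (hess (fhat L f ths) x) \<and>
                   loewner_le (hess (fhat L f ths) x) (M *\<^sub>R mat 1))"
    and samples: "\<And>t l. l < L \<Longrightarrow> th t l \<in> \<Theta>"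
    and steps: "\<And>t. \<epsilon> t > 0"
    and iter: "\<And>t. w (Suc t) = w t - \<epsilon> t *\<^sub>R
                 (matrix_inv (Bhat \<tau> (vseq w) (rseq L f th w) t) *v shat L f (th t) (w t))"
  shows "\<forall>t\<ge>1. (\<forall>s<t. shat L f (th s) (w s) \<noteq> 0) \<longrightarrow>
           (let n = CARD('n);
                c = m ^ (n + \<tau>) / (real (n + \<tau>) * M) ^ (n + \<tau> - 1);
                C = real (n + \<tau>) * M
            in loewner_le (c *\<^sub>R mat 1) (Bhat \<tau> (vseq w) (rseq L f th w) t) \<and>
               loewner_le (Bhat \<tau> (vseq w) (rseq L f th w) t) (C *\<^sub>R mat 1))"
proof (intro allI impI)
  fix t :: nat
  assume t1: "t \<ge> 1" and gnz: "\<forall>s<t. shat L f (th s) (w s) \<noteq> 0"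
  define V where "V = vseq w"
  define R where "R = rseq L f th w"
  have thS: "\<forall>l<L. th s l \<in> \<Theta>" for s using samples by blast
  have hf: "hfun (fhat L f (th s)) m M" for s
    unfolding hfun_def using A[OF thS[of s]] mM by auto
  have RV: "R s = grad (fhat L f (th s)) (w (Suc s)) - grad (fhat L f (th s)) (w s)" for s
    unfolding R_def rseq_def using shat_grad[OF L _ thS[of s]] A by metis
  have VR: "m * (V s \<bullet> V s) \<le> V s \<bullet> R s \<and> R s \<bullet> R s \<le> M * (V s \<bullet> R s)" for s
  proof -
    have V: "V s = w (Suc s) - w s" unfolding V_def vseq_def by simp
    show ?thesis unfolding RV V
      using hfun.mono_lower[OF hf[of s], of "w (Suc s)" "w s"] hfun.cocoercive[OF hf[of s], of "w (Suc s)" "w s"]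
      by (simp add: inner_commute)
  qed
  have vnz: "s < t \<longrightarrow> V s \<noteq> 0" for s
  proof (induction s rule: less_induct)
    case (less s)
    show ?case
    proof
      assume st: "s < t"
      obtain \<beta> where b0: "\<beta> > 0" and lb: "\<forall>x. \<beta> * (x \<bullet> x) \<le> x \<bullet> (Bhat \<tau> V R s *v x)"
      proof (cases "s = 0")
        case True
        have "Bhat \<tau> V R s = mat 1" using True by (simp add: Bhat_def gam_def)
        thus ?thesis using that[of 1] by simp
      next
        case False
        have P: "\<And>s'. s' < s \<Longrightarrow> m * (V s' \<bullet> V s') \<le> V s' \<bullet> R s' \<and> R s' \<bullet> R s' \<le> M * (V s' \<bullet> R s') \<and> V s' \<noteq> 0"
          using VR less.IH st by auto
        have "\<forall>x. m / (real (min \<tau> s + 1) * (M/m)^(min \<tau> s)) * (x \<bullet> x) \<le> x \<bullet> (Bu \<tau> V R s (min \<tau> s) *v x)"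
          using Bu_bounds[OF mM(1) mM(2) _ P, where u="min \<tau> s" and \<tau>=\<tau>] False by auto
        moreover have "m / (real (min \<tau> s + 1) * (M/m)^(min \<tau> s)) > 0" using mM by simp
        ultimately show ?thesis using that unfolding Bhat_def by blast
      qed
      have inv: "invertible (Bhat \<tau> V R s)" by (rule pd_invertible[OF b0 lb])
      show "V s \<noteq> 0"
      proof
        assume V0: "V s = 0"
        have "V s = w (Suc s) - w s" unfolding V_def vseq_def by simp
        also have "\<dots> = - (\<epsilon> s *\<^sub>R (matrix_inv (Bhat \<tau> V R s) *v shat L f (th s) (w s)))"
          using iter[of s] unfolding V_def R_def by simp
        finally have "V s = - (\<epsilon> s *\<^sub>R (matrix_inv (Bhat \<tau> V R s) *v shat L f (th s) (w s)))" .
        hence "matrix_inv (Bhat \<tau> V R s) *v shat L f (th s) (w s) = 0" using V0 steps[of s] by simp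
        hence "Bhat \<tau> V R s *v (matrix_inv (Bhat \<tau> V R s) *v shat L f (th s) (w s)) = 0" by simp
        hence "shat L f (th s) (w s) = 0"
          by (simp add: matrix_vector_mul_assoc matrix_inv_right[OF inv])
        thus False using gnz st by blast
      qed
    qed
  qed
  have P: "\<And>s'. s' < t \<Longrightarrow> m * (V s' \<bullet> V s') \<le> V s' \<bullet> R s' \<and> R s' \<bullet> R s' \<le> M * (V s' \<bullet> R s') \<and> V s' \<noteq> 0"
    using VR vnz by auto
  define k where "k = min \<tau> t"
  have bnd: "(\<forall>x. m / (real (k + 1) * (M/m)^k) * (x \<bullet> x) \<le> x \<bullet> (Bhat \<tau> V R t *v x)) \<and>
     (\<forall>x. x \<bullet> (Bhat \<tau> V R t *v x) \<le> real (k+1) * M * (x \<bullet> x))"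
    using Bu_bounds[OF mM(1) mM(2) t1 P, where u=k and \<tau>=\<tau>] unfolding k_def Bhat_def by auto
  define n where "n = CARD('n)"
  have n1: "n \<ge> 1" unfolding n_def by simp
  define N where "N = n + \<tau>"
  define c where "c = m ^ N / (real N * M) ^ (N - 1)"
  define C where "C = real N * M"
  have kt: "k \<le> \<tau>" unfolding k_def by simp
  have M0: "M > 0" using mM by simp
  have C_ok: "real (k+1) * M \<le> C" unfolding C_def N_def using kt n1 M0 by simp
  have c_ok: "c \<le> m / (real (k + 1) * (M/m)^k)"
  proof -
    define \<rho> where "\<rho> = M / m"
    have \<rho>1: "\<rho> \<ge> 1" unfolding \<rho>_def using mM by simp
    have N2: "N \<ge> 2" unfolding N_def using n1 tau by simp
    define j where "j = N - 1"
    have Mm: "M = \<rho> * m" unfolding \<rho>_def using mM by simp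
    have Mj: "M ^ j = \<rho>^j * m^j" unfolding Mm by (rule power_mult_distrib)
    have mN: "m ^ N = m^j * m" unfolding j_def using N2
      by (metis Suc_diff_1 less_le_trans pos2 power_Suc2)
    have mj0: "m^j \<noteq> 0" using mM by simp
    have "c = (m^j * m) / (m^j * (real N ^ j * \<rho> ^ j))"
      unfolding c_def mN j_def[symmetric] power_mult_distrib Mj by (simp add: mult_ac)
    also have "\<dots> = m / (real N ^ j * \<rho> ^ j)" using mj0 by (rule nonzero_mult_divide_mult_cancel_left)
    finally have ceq: "c = m / (real N ^ (N - 1) * \<rho> ^ (N - 1))" unfolding j_def .
    have p1: "\<rho> ^ k \<le> \<rho> ^ (N - 1)" using \<rho>1 kt unfolding N_def using n1 by (intro power_increasing) auto
    have p2: "real (k + 1) \<le> real N ^ (N - 1)"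
    proof -
      have "real (k+1) \<le> real N" unfolding N_def using kt n1 by simp
      also have "real N = real N ^ 1" by simp
      also have "\<dots> \<le> real N ^ (N - 1)" using N2 by (intro power_increasing) auto
      finally show ?thesis .
    qed
    have "real (k + 1) * \<rho> ^ k \<le> real N ^ (N - 1) * \<rho> ^ (N - 1)"
      using p1 p2 \<rho>1 by (intro mult_mono) auto
    moreover have "real (k + 1) * \<rho> ^ k > 0" using \<rho>1 by simp
    ultimately show ?thesis unfolding ceq \<rho>_def[symmetric] using mM by (intro divide_left_mono) auto
  qed
  have lowc: "\<forall>x. c * (x \<bullet> x) \<le> x \<bullet> (Bhat \<tau> V R t *v x)"
  proof
    fix x :: "real^'n"
    have "c * (x \<bullet> x) \<le> m / (real (k + 1) * (M/m)^k) * (x \<bullet> x)" by (rule mult_right_mono[OF c_ok inner_ge_zero])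
    also have "\<dots> \<le> x \<bullet> (Bhat \<tau> V R t *v x)" using bnd by blast
    finally show "c * (x \<bullet> x) \<le> x \<bullet> (Bhat \<tau> V R t *v x)" .
  qed
  have upC: "\<forall>x. x \<bullet> (Bhat \<tau> V R t *v x) \<le> C * (x \<bullet> x)"
  proof
    fix x :: "real^'n"
    have "x \<bullet> (Bhat \<tau> V R t *v x) \<le> real (k+1) * M * (x \<bullet> x)" using bnd by blast
    also have "\<dots> \<le> C * (x \<bullet> x)" by (rule mult_right_mono[OF C_ok inner_ge_zero])
    finally show "x \<bullet> (Bhat \<tau> V R t *v x) \<le> C * (x \<bullet> x)" .
  qed
  show "let n = CARD('n);
                c = m ^ (n + \<tau>) / (real (n + \<tau>) * M) ^ (n + \<tau> - 1);
                C = real (n + \<tau>) * M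
            in loewner_le (c *\<^sub>R mat 1) (Bhat \<tau> (vseq w) (rseq L f th w) t) \<and>
               loewner_le (Bhat \<tau> (vseq w) (rseq L f th w) t) (C *\<^sub>R mat 1)"
    unfolding Let_def using loewner_of_lower[OF lowc] loewner_of_upper[OF upC]
    unfolding c_def C_def N_def n_def V_def R_def by simp
qed


end
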